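(* Let $N\ge 3$ and integers $0\le j\le i<N-1$. Let $c$ be a class, and let $A\subseteq B$ be sets of classes with $c\in A$, $|A|=N-i$, $|B|=N-j$. Let sample $s_1$ have class uniformly distributed on $A$ and sample $s_2$ have class uniformly distributed on $B$, independently. In a $3$IC query of $s_1,s_2$ with the representative of class $c$, define the number of settled samples to be $2$ if both $s_1$ and $s_2$ have class $c$; $1$ if exactly one of them has class $c$, or if neither has class $c$ but $s_1$ and $s_2$ have the same class; and $0$ otherwise. Then the expected number of settled samples is $$SL=\frac{2(N-i)+(N-j-1)}{(N-i)(N-j)}.$$
   Context: This models one query of a greedy round-robin triplet ($3$IC) labeling algorithm on a dataset with $N$ equally likely classes: the length of a sample is the number of class representatives it has already been (unsuccessfully) compared with, so a sample of length $i$ is uniformly distributed over the $N-i$ classes not yet excluded; $s_1$ has length $i$, $s_2$ has length $j$, and the classes excluded for $s_2$ are among those excluded for $s_1$. A $3$IC query presents three items to an error-free oracle that reports which of them share a class; when $s_1,s_2$ match each other but not the representative, one of them is merged into the other and counted as settled. *)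

theory Defs
  imports "HOL-Probability.Probability"
begin

definition settled :: "'a \<Rightarrow> 'a \<Rightarrow> 'a \<Rightarrow> real" where
  "settled c x y =
     (if x = c \<and> y = c then 2
      else if x = c \<or> y = c then 1
      else if x = y then 1
      else 0)"

end

theory Submission
  imports Defs
begin

lemma pair_pmf_of_set_eq:
  assumes "finite A" "A \<noteq> {}" "finite B" "B \<noteq> {}"
  shows "pair_pmf (pmf_of_set A) (pmf_of_set B) = pmf_of_set (A \<times> B)"
  by (rule pmf_eqI) (auto simp: pmf_pair assms card_cartesian_product indicator_def)

lemma settled_split:
  "settled c x y = (if x = c then 1 else 0) + (if y = c then 1 else 0)
     + (if x \<noteq> c \<and> x = y then 1 else 0)"
  by (simp add: settled_def)

theorem lemma2:
  fixes N i j :: nat and c :: 'a and A B :: "'a set"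
  assumes "N \<ge> 3" and "j \<le> i" and "i < N - 1"
    and "finite B" and "A \<subseteq> B" and "c \<in> A"
    and "card A = N - i" and "card B = N - j"
  shows "measure_pmf.expectation (pair_pmf (pmf_of_set A) (pmf_of_set B))
           (\<lambda>(x, y). settled c x y)
         = (2 * (real N - real i) + (real N - real j - 1))
           / ((real N - real i) * (real N - real j))"
proof -
  have fA: "finite A" using assms(4,5) finite_subset by blast
  have nA: "A \<noteq> {}" "B \<noteq> {}" using assms(5,6) by auto
  have cB: "c \<in> B" using assms(5,6) by auto
  have s1: "(\<Sum>x\<in>A. (if x = c then 1 else 0::real)) = 1"
    using fA assms(6) by (simp add: sum.delta)
  have s2: "(\<Sum>y\<in>B. (if y = c then 1 else 0::real)) = 1"
    using assms(4) cB by (simp add: sum.delta)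
  have s3: "(\<Sum>x\<in>A. \<Sum>y\<in>B. (if x \<noteq> c \<and> x = y then 1 else 0::real))
      = (\<Sum>x\<in>A. if x \<noteq> c then 1 else 0)"
  proof (rule sum.cong[OF refl])
    fix x assume "x \<in> A"
    then have "x \<in> B" using assms(5) by auto
    then show "(\<Sum>y\<in>B. (if x \<noteq> c \<and> x = y then 1 else 0::real)) = (if x \<noteq> c then 1 else 0)"
      using assms(4) by (cases "x = c") (auto simp: sum.delta)
  qed
  have s4: "(\<Sum>x\<in>A. (if x \<noteq> c then 1 else 0::real)) = real (card A) - 1"
  proof -
    have "(\<Sum>x\<in>A. (if x \<noteq> c then 1 else 0::real)) = (\<Sum>x\<in>A. 1 - (if x = c then 1 else 0))"
      by (rule sum.cong) auto
    also have "\<dots> = real (card A) - 1" using s1 by (simp add: sum_subtractf)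
    finally show ?thesis .
  qed
  have tot: "(\<Sum>p\<in>A \<times> B. (\<lambda>(x, y). settled c x y) p)
       = real (card B) + 2 * real (card A) - 1"
  proof -
    have "(\<Sum>p\<in>A \<times> B. (\<lambda>(x, y). settled c x y) p) = (\<Sum>x\<in>A. \<Sum>y\<in>B. settled c x y)"
      by (simp add: sum.cartesian_product)
    also have "\<dots> = (\<Sum>x\<in>A. \<Sum>y\<in>B. (if x = c then 1 else 0))
       + (\<Sum>x\<in>A. \<Sum>y\<in>B. (if y = c then 1 else 0))
       + (\<Sum>x\<in>A. \<Sum>y\<in>B. (if x \<noteq> c \<and> x = y then 1 else 0::real))"
      by (simp add: settled_split sum.distrib)
    also have "\<dots> = real (card B) + real (card A) + (real (card A) - 1)"
      using s1 s2 s3 s4 by (simp add: sum_distrib_left[symmetric])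
    finally show ?thesis by simp
  qed
  have "measure_pmf.expectation (pair_pmf (pmf_of_set A) (pmf_of_set B))
           (\<lambda>(x, y). settled c x y) = (real (card B) + 2 * real (card A) - 1) / (real (card A) * real (card B))"
    using fA nA assms(4) by (simp add: pair_pmf_of_set_eq integral_pmf_of_set tot card_cartesian_product)
  also have "\<dots> = (2 * (real N - real i) + (real N - real j - 1))
           / ((real N - real i) * (real N - real j))"
    using assms by (simp add: of_nat_diff)
  finally show ?thesis .
qed

end
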